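(* In the setting of the context, for every $j\in[N]$, $s\in\Gamma$, $k\in[n]$ and $\dagger\in\{+,-\}$, one has $u^\dagger_k\le h^\dagger_k$ pointwise on $S_f^{sP}$.
   Context: Standing setting: $\Gamma$ countably infinite, $n\in\mathbb N$, $\mathbb Z\Gamma$ the integral group ring (product $(fg)_t=\sum_sf_{ts^{-1}}g_s$, involution $(f^* )_s=f_{s^{-1}}$, $(f^* )^{(km)}=(f^{(mk)})^*$). $f=M-g\in M_n(\mathbb Z\Gamma)$, $M=\mathrm{diag}(M_1,\dots,M_n)$ positive integers, $M_k>\sum_m\|g^{(km)}\|_1$, and a subsemigroup $P\subseteq\Gamma\setminus\{e_\Gamma\}$ containing all $\mathrm{supp}(g^{(km)})$; $\bar P=P\cup\{e_\Gamma\}$, $\bar M=\max_kM_k$, $S_f=\prod_k\{0,\dots,M_k-1\}$, $Y=S_f^\Gamma$ (row vectors, entries $y_{s,k}$, $(yF)_m=\sum_ky_kF^{(km)}$ by convolution). For $E\subseteq\Gamma$, $\pi_E:S_f^\Gamma\to S_f^E$ is the restriction. $N\ge\bar M\|(f^* )^{-1}\|_{1,\infty}$ fixed integer, $V=(\{-N,\dots,N\}^\Gamma)^n\setminus\{0\}$, $Z=\{(y,c)\in Y\times V:y+cf^*\in Y\}$, $\varphi:Y\times V\to Y$ the projection, $Z^+_{j,s,k}=\{(y,c)\in Z:\max_{t,m}|c_{t,m}|=c_{s,k}=j\}$, $Z^-_{j,s,k}=\{(y,c)\in Z:\max_{t,m}|c_{t,m}|=-c_{s,k}=j\}$. $A_k=\{(a,m):g^{(km)}_a\neq0\}$;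 for $B_k\subseteq A_k$, $\dagger\in\{+,-\}$ (signs $\pm1$), $Z^\dagger_{j,s,k,B_k}$ is the set of $(y,c)\in Z^\dagger_{j,s,k}$ with $c_{sa,m}=\dagger\mathrm{sgn}(g^{(km)}_a)j$ for $(a,m)\in B_k$ and $c_{sa,m}\neq\dagger\mathrm{sgn}(g^{(km)}_a)j$ for $(a,m)\in A_k\setminus B_k$; $Z^\dagger_{j,s,k,B_k,i}=\{(y,c)\in Z^\dagger_{j,s,k,B_k}:y_{s,k}=i\}$. Functions on $S_f^{sP}$: $u^\dagger_k=\sum_{i=0}^{M_k-1}\chi_{\pi_{sP}\varphi(\bigcup_{B_k\subseteq A_k}Z^\dagger_{j,s,k,B_k,i})}$ and $h^\dagger_k=\sum_{(a,m)\in A_k}|g^{(km)}_a|\,\chi_{\pi_{sa\bar P}\varphi(Z^{\dagger\mathrm{sgn}(g^{(km)}_a)}_{j,sa,m})\times S_f^{sP\setminus sa\bar P}}$ (note $sa\bar P\subseteq sP$ since $a\in P$; $Z^{\pm\cdot\pm}$ means $Z^+$ or $Z^-$ according to the product sign). *)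

theory Defs
  imports "HOL-Analysis.Analysis" "HOL-Library.Countable" "HOL-Library.FuncSet"
begin

(* The group Gamma is a type 'g of class group_add: the group product s t is s + t,
   the identity e is 0, the inverse s^{-1} is - s.  Matrix indices k, m range over
   {..<n} (i.e. [n] shifted to start at 0). *)

definition supp :: "('g \<Rightarrow> 'b::zero) \<Rightarrow> 'g set" where
  "supp h = {s. h s \<noteq> 0}"

definition star :: "('g::group_add \<Rightarrow> 'b) \<Rightarrow> 'g \<Rightarrow> 'b" where
  "star h s = h (- s)"

definition fmat :: "(nat \<Rightarrow> int) \<Rightarrow> (nat \<Rightarrow> nat \<Rightarrow> 'g::group_add \<Rightarrow> int) \<Rightarrow> nat \<Rightarrow> nat \<Rightarrow> 'g \<Rightarrow> int" where
  "fmat M g k m s = (if k = m \<and> s = 0 then M k else 0) - g k m s"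

definition fstar :: "(nat \<Rightarrow> int) \<Rightarrow> (nat \<Rightarrow> nat \<Rightarrow> 'g::group_add \<Rightarrow> int) \<Rightarrow> nat \<Rightarrow> nat \<Rightarrow> 'g \<Rightarrow> int" where
  "fstar M g k m = star (fmat M g m k)"

definition conv :: "('g::group_add \<Rightarrow> real) \<Rightarrow> ('g \<Rightarrow> real) \<Rightarrow> 'g \<Rightarrow> real" where
  "conv A B t = (\<Sum>\<^sub>\<infinity>s. A (t + - s) * B s)"

definition matmul :: "nat \<Rightarrow> (nat \<Rightarrow> nat \<Rightarrow> 'g::group_add \<Rightarrow> real) \<Rightarrow> (nat \<Rightarrow> nat \<Rightarrow> 'g \<Rightarrow> real) \<Rightarrow> nat \<Rightarrow> nat \<Rightarrow> 'g \<Rightarrow> real" where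
  "matmul n A B k m = (\<lambda>t. \<Sum>l<n. conv (A k l) (B l m) t)"

definition ident :: "nat \<Rightarrow> nat \<Rightarrow> 'g::group_add \<Rightarrow> real" where
  "ident k m t = (if k = m \<and> t = 0 then 1 else 0)"

(* ||F||_{1,infty} = max_m sum_k ||F^{(km)}||_1  (operator norm of y |-> yF on l^infty row vectors) *)
definition norm1inf :: "nat \<Rightarrow> (nat \<Rightarrow> nat \<Rightarrow> 'g \<Rightarrow> real) \<Rightarrow> real" where
  "norm1inf n F = Max ((\<lambda>m. \<Sum>k<n. (\<Sum>\<^sub>\<infinity>t. \<bar>F k m t\<bar>)) ` {..<n})"

definition Sf :: "nat \<Rightarrow> (nat \<Rightarrow> int) \<Rightarrow> (nat \<Rightarrow> int) set" where
  "Sf n M = {v. \<forall>k. (k < n \<longrightarrow> 0 \<le> v k \<and> v k < M k) \<and> (n \<le> k \<longrightarrow> v k = 0)}"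

definition Yset :: "nat \<Rightarrow> (nat \<Rightarrow> int) \<Rightarrow> ('g \<Rightarrow> nat \<Rightarrow> int) set" where
  "Yset n M = {y. \<forall>t. y t \<in> Sf n M}"

definition Vset :: "nat \<Rightarrow> int \<Rightarrow> ('g \<Rightarrow> nat \<Rightarrow> int) set" where
  "Vset n N = {c. (\<forall>t k. (k < n \<longrightarrow> \<bar>c t k\<bar> \<le> N) \<and> (n \<le> k \<longrightarrow> c t k = 0)) \<and> c \<noteq> (\<lambda>_ _. 0)}"

definition rmul :: "nat \<Rightarrow> (nat \<Rightarrow> nat \<Rightarrow> 'g::group_add \<Rightarrow> int) \<Rightarrow> ('g \<Rightarrow> nat \<Rightarrow> int) \<Rightarrow> 'g \<Rightarrow> nat \<Rightarrow> int" where
  "rmul n F c t m = (if m < n then (\<Sum>k<n. \<Sum>s\<in>supp (F k m). c (t + - s) k * F k m s) else 0)"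

definition Zset :: "nat \<Rightarrow> (nat \<Rightarrow> int) \<Rightarrow> (nat \<Rightarrow> nat \<Rightarrow> 'g::group_add \<Rightarrow> int) \<Rightarrow> int \<Rightarrow> (('g \<Rightarrow> nat \<Rightarrow> int) \<times> ('g \<Rightarrow> nat \<Rightarrow> int)) set" where
  "Zset n M g N = {(y, c). y \<in> Yset n M \<and> c \<in> Vset n N \<and>
      (\<lambda>t m. y t m + rmul n (fstar M g) c t m) \<in> Yset n M}"

definition cmax :: "nat \<Rightarrow> ('g \<Rightarrow> nat \<Rightarrow> int) \<Rightarrow> int" where
  "cmax n c = Max {\<bar>c t m\<bar> | t m. m < n}"

(* Z^+_{j,s,k} (sigma = 1) and Z^-_{j,s,k} (sigma = -1) *)
definition Zsig :: "nat \<Rightarrow> (nat \<Rightarrow> int) \<Rightarrow> (nat \<Rightarrow> nat \<Rightarrow> 'g::group_add \<Rightarrow> int) \<Rightarrow> int \<Rightarrow> int \<Rightarrow> int \<Rightarrow> 'g \<Rightarrow> nat \<Rightarrow> (('g \<Rightarrow> nat \<Rightarrow> int) \<times> ('g \<Rightarrow> nat \<Rightarrow> int)) set" where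
  "Zsig n M g N \<sigma> j s k = {(y, c) \<in> Zset n M g N. cmax n c = j \<and> c s k = \<sigma> * j}"

definition Aset :: "nat \<Rightarrow> (nat \<Rightarrow> nat \<Rightarrow> 'g \<Rightarrow> int) \<Rightarrow> nat \<Rightarrow> ('g \<times> nat) set" where
  "Aset n g k = {(a, m). m < n \<and> g k m a \<noteq> 0}"

definition ZB :: "nat \<Rightarrow> (nat \<Rightarrow> int) \<Rightarrow> (nat \<Rightarrow> nat \<Rightarrow> 'g::group_add \<Rightarrow> int) \<Rightarrow> int \<Rightarrow> int \<Rightarrow> int \<Rightarrow> 'g \<Rightarrow> nat \<Rightarrow> ('g \<times> nat) set \<Rightarrow> (('g \<Rightarrow> nat \<Rightarrow> int) \<times> ('g \<Rightarrow> nat \<Rightarrow> int)) set" where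
  "ZB n M g N \<sigma> j s k B = {(y, c) \<in> Zsig n M g N \<sigma> j s k.
      (\<forall>(a, m) \<in> B. c (s + a) m = \<sigma> * sgn (g k m a) * j) \<and>
      (\<forall>(a, m) \<in> Aset n g k - B. c (s + a) m \<noteq> \<sigma> * sgn (g k m a) * j)}"

definition ZBi :: "nat \<Rightarrow> (nat \<Rightarrow> int) \<Rightarrow> (nat \<Rightarrow> nat \<Rightarrow> 'g::group_add \<Rightarrow> int) \<Rightarrow> int \<Rightarrow> int \<Rightarrow> int \<Rightarrow> 'g \<Rightarrow> nat \<Rightarrow> ('g \<times> nat) set \<Rightarrow> int \<Rightarrow> (('g \<Rightarrow> nat \<Rightarrow> int) \<times> ('g \<Rightarrow> nat \<Rightarrow> int)) set" where
  "ZBi n M g N \<sigma> j s k B i = {(y, c) \<in> ZB n M g N \<sigma> j s k B. y s k = i}"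

definition proj :: "'g set \<Rightarrow> ('g \<Rightarrow> 'b) \<Rightarrow> ('g \<Rightarrow> 'b)" where
  "proj E y = restrict y E"

definition ltrans :: "'g::group_add \<Rightarrow> 'g set \<Rightarrow> 'g set" where
  "ltrans s E = (\<lambda>p. s + p) ` E"

definition cfgprod :: "'g set \<Rightarrow> ('g \<Rightarrow> 'b) set \<Rightarrow> 'g set \<Rightarrow> ('g \<Rightarrow> 'b) set \<Rightarrow> ('g \<Rightarrow> 'b) set" where
  "cfgprod E1 A E2 B = {z \<in> extensional (E1 \<union> E2). restrict z E1 \<in> A \<and> restrict z E2 \<in> B}"

definition ufun :: "nat \<Rightarrow> (nat \<Rightarrow> int) \<Rightarrow> (nat \<Rightarrow> nat \<Rightarrow> 'g::group_add \<Rightarrow> int) \<Rightarrow> int \<Rightarrow> 'g set \<Rightarrow> int \<Rightarrow> int \<Rightarrow> 'g \<Rightarrow> nat \<Rightarrow> ('g \<Rightarrow> nat \<Rightarrow> int) \<Rightarrow> int" where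
  "ufun n M g N P \<sigma> j s k x = (\<Sum>i\<in>{0..M k - 1}.
      of_bool (x \<in> proj (ltrans s P) ` fst ` (\<Union>B\<in>Pow (Aset n g k). ZBi n M g N \<sigma> j s k B i)))"

definition hfun :: "nat \<Rightarrow> (nat \<Rightarrow> int) \<Rightarrow> (nat \<Rightarrow> nat \<Rightarrow> 'g::group_add \<Rightarrow> int) \<Rightarrow> int \<Rightarrow> 'g set \<Rightarrow> int \<Rightarrow> int \<Rightarrow> 'g \<Rightarrow> nat \<Rightarrow> ('g \<Rightarrow> nat \<Rightarrow> int) \<Rightarrow> int" where
  "hfun n M g N P \<sigma> j s k x = (\<Sum>(a, m)\<in>Aset n g k. \<bar>g k m a\<bar> *
      of_bool (x \<in> cfgprod (ltrans (s + a) (insert 0 P))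
                     (proj (ltrans (s + a) (insert 0 P)) ` fst ` Zsig n M g N (\<sigma> * sgn (g k m a)) j (s + a) m)
                     (ltrans s P - ltrans (s + a) (insert 0 P))
                     (Pi\<^sub>E (ltrans s P - ltrans (s + a) (insert 0 P)) (\<lambda>_. Sf n M))))"

end

theory Submission
  imports Defs
begin

lemma Aset_sum:
  assumes "\<forall>m<n. finite (supp (g k m))"
  shows "(\<Sum>(a,m)\<in>Aset n g k. f a m) = (\<Sum>m<n. \<Sum>a\<in>supp (g k m). (f a m :: int))"
proof -
  have eq: "Aset n g k = (\<lambda>(m,a). (a,m)) ` (SIGMA m:{..<n}. supp (g k m))"
    by (force simp: Aset_def supp_def)
  have inj: "inj_on (\<lambda>(m,a). (a,m)) (SIGMA m:{..<n}. supp (g k m))"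
    by (auto simp: inj_on_def)
  have "(\<Sum>(a,m)\<in>Aset n g k. f a m) = (\<Sum>(m,a)\<in>(SIGMA m:{..<n}. supp (g k m)). f a m)"
    unfolding eq by (subst sum.reindex[OF inj]) (simp add: comp_def case_prod_beta)
  also have "\<dots> = (\<Sum>m<n. \<Sum>a\<in>supp (g k m). f a m)"
    using assms by (subst sum.Sigma) auto
  finally show ?thesis .
qed

lemma rmul_inner:
  fixes g :: "nat \<Rightarrow> nat \<Rightarrow> 'g::group_add \<Rightarrow> int"
  assumes fin: "finite (supp (g k l))" and g0: "g k l 0 = 0"
  shows "(\<Sum>u\<in>supp (fstar M g l k). c (s + - u) l * fstar M g l k u)
     = (if l = k then M k * c s k else 0) - (\<Sum>a\<in>supp (g k l). g k l a * c (s+a) l)"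
proof -
  define F where "F = fstar M g l k"
  have Fu: "F u = (if k = l \<and> u = 0 then M k else 0) - g k l (-u)" for u
    by (simp add: F_def fstar_def star_def fmat_def)
  define T0 where "T0 = insert 0 (uminus ` supp (g k l))"
  have finT: "finite T0" using fin by (simp add: T0_def)
  have sub: "supp F \<subseteq> T0"
  proof
    fix u assume u: "u \<in> supp F"
    show "u \<in> T0"
    proof (rule ccontr)
      assume "u \<notin> T0"
      then have "u \<noteq> 0" "- u \<notin> supp (g k l)"
        by (auto simp: T0_def image_iff intro: exI[of _ "-u"])
      then have "F u = 0" by (simp add: Fu supp_def)
      with u show False by (simp add: supp_def)
    qed
  qed
  have z: "0 \<notin> uminus ` supp (g k l)" using g0 by (auto simp: supp_def)
  have "(\<Sum>u\<in>supp F. c (s + - u) l * F u) = (\<Sum>u\<in>T0. c (s + - u) l * F u)"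
    by (rule sum.mono_neutral_left[OF finT sub]) (auto simp: supp_def)
  also have "\<dots> = c s l * F 0 + (\<Sum>u\<in>uminus ` supp (g k l). c (s + - u) l * F u)"
    unfolding T0_def using fin z by (subst sum.insert) auto
  also have "(\<Sum>u\<in>uminus ` supp (g k l). c (s + - u) l * F u)
      = (\<Sum>a\<in>supp (g k l). c (s + a) l * F (- a))"
    by (subst sum.reindex) (auto simp: inj_on_def)
  also have "\<dots> = (\<Sum>a\<in>supp (g k l). - (g k l a * c (s + a) l))"
  proof (rule sum.cong)
    fix a assume "a \<in> supp (g k l)"
    then have "a \<noteq> 0" using g0 by (auto simp: supp_def)
    then show "c (s + a) l * F (- a) = - (g k l a * c (s + a) l)" by (simp add: Fu)
  qed simp
  finally have X: "(\<Sum>u\<in>supp F. c (s + - u) l * F u) = c s l * F 0 + (\<Sum>a\<in>supp (g k l). - (g k l a * c (s + a) l))" .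
  have F0: "F 0 = (if l = k then M k else 0)" using g0 by (auto simp: Fu)
  show ?thesis using X unfolding F0 unfolding F_def
    by (cases "l = k") (simp_all add: sum_negf mult.commute)
qed

lemma rmul_eq:
  fixes g :: "nat \<Rightarrow> nat \<Rightarrow> 'g::group_add \<Rightarrow> int"
  assumes "k < n" and fin: "\<forall>l<n. finite (supp (g k l))" and g0: "\<forall>l<n. g k l 0 = 0"
  shows "rmul n (fstar M g) c s k = M k * c s k - (\<Sum>l<n. \<Sum>a\<in>supp (g k l). g k l a * c (s+a) l)"
proof -
  have "rmul n (fstar M g) c s k = (\<Sum>l<n. (if l = k then M k * c s k else 0) - (\<Sum>a\<in>supp (g k l). g k l a * c (s+a) l))"
  proof -
    have "\<forall>l<n. (\<Sum>u\<in>supp (fstar M g l k). c (s + - u) l * fstar M g l k u)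
     = (if l = k then M k * c s k else 0) - (\<Sum>a\<in>supp (g k l). g k l a * c (s+a) l)"
      using assms rmul_inner by blast
    then show ?thesis unfolding rmul_def using assms(1) by (simp only: if_True) (intro sum.cong refl, auto)
  qed
  also have "\<dots> = M k * c s k - (\<Sum>l<n. \<Sum>a\<in>supp (g k l). g k l a * c (s+a) l)"
    using assms(1) by (simp add: sum_subtractf)
  finally show ?thesis .
qed


lemma termwise:
  fixes g c \<sigma> j :: int
  assumes "g \<noteq> 0" "\<sigma> \<in> {1, -1}" "\<bar>c\<bar> \<le> j"
  shows "\<sigma> * (g * c) \<le> \<bar>g\<bar> * (j - 1) + \<bar>g\<bar> * of_bool (c = \<sigma> * sgn g * j)"
proof -
  define w where "w = \<sigma> * sgn g * c"
  have sg: "sgn g * sgn g = 1" using assms(1) by (simp add: sgn_if)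
  have ss: "\<sigma> * \<sigma> = 1" using assms(2) by auto
  have e1: "\<sigma> * (g * c) = \<bar>g\<bar> * w"
    unfolding w_def using assms(1) by (cases "g > 0") auto
  have wle: "w \<le> j" unfolding w_def using assms by (cases "g > 0") auto
  have eq: "(c = \<sigma> * sgn g * j) = (w = j)"
  proof
    assume "c = \<sigma> * sgn g * j"
    then have "w = (\<sigma> * \<sigma>) * (sgn g * sgn g) * j" unfolding w_def by (simp add: algebra_simps)
    then show "w = j" using sg ss by simp
  next
    assume "w = j"
    then have "\<sigma> * sgn g * w = \<sigma> * sgn g * j" by simp
    moreover have "\<sigma> * sgn g * w = (\<sigma> * \<sigma>) * (sgn g * sgn g) * c" unfolding w_def by (simp add: algebra_simps)
    ultimately show "c = \<sigma> * sgn g * j" using sg ss by simp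
  qed
  show ?thesis
  proof (cases "w = j")
    case True
    have o1: "of_bool (c = \<sigma> * sgn g * j) = (1::int)" using eq True by simp
    have h1: "\<sigma> * (g * c) = \<bar>g\<bar> * j" using e1 True by simp
    show ?thesis unfolding h1 o1 by (simp add: algebra_simps)
  next
    case False
    then have "w \<le> j - 1" using wle by simp
    then have "\<bar>g\<bar> * w \<le> \<bar>g\<bar> * (j - 1)" by (simp add: mult_left_mono)
    then show ?thesis using e1 eq False by simp
  qed
qed

lemma key:
  fixes g :: "nat \<Rightarrow> nat \<Rightarrow> 'g::group_add \<Rightarrow> int" and c y :: "'g \<Rightarrow> nat \<Rightarrow> int"
  assumes kn: "k < n" and fin: "\<forall>l<n. finite (supp (g k l))" and g0: "\<forall>l<n. g k l 0 = 0"
    and Mdom: "(\<Sum>m<n. \<Sum>a\<in>supp (g k m). \<bar>g k m a\<bar>) < M k"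
    and sig: "\<sigma> \<in> {1, -1}" and j: "1 \<le> j" and bound: "\<forall>t m. m < n \<longrightarrow> \<bar>c t m\<bar> \<le> j"
    and csk: "c s k = \<sigma> * j"
    and y1: "0 \<le> y s k + rmul n (fstar M g) c s k"
    and y2: "y s k + rmul n (fstar M g) c s k \<le> M k - 1"
  shows "(\<sigma> = 1 \<longrightarrow> y s k + 1 \<le> (\<Sum>l<n. \<Sum>a\<in>supp (g k l). \<bar>g k l a\<bar> * of_bool (c (s+a) l = \<sigma> * sgn (g k l a) * j)))
       \<and> (\<sigma> = -1 \<longrightarrow> M k - y s k \<le> (\<Sum>l<n. \<Sum>a\<in>supp (g k l). \<bar>g k l a\<bar> * of_bool (c (s+a) l = \<sigma> * sgn (g k l a) * j)))"
proof -
  define T where "T = (\<Sum>l<n. \<Sum>a\<in>supp (g k l). \<bar>g k l a\<bar> * of_bool (c (s+a) l = \<sigma> * sgn (g k l a) * j))"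
  define S where "S = (\<Sum>m<n. \<Sum>a\<in>supp (g k m). \<bar>g k m a\<bar>)"
  define D where "D = (\<Sum>l<n. \<Sum>a\<in>supp (g k l). g k l a * c (s+a) l)"
  have R: "rmul n (fstar M g) c s k = M k * c s k - D"
    unfolding D_def by (rule rmul_eq[where g=g and k=k and n=n, OF kn fin g0])
  have "\<sigma> * D = (\<Sum>l<n. \<Sum>a\<in>supp (g k l). \<sigma> * (g k l a * c (s+a) l))"
    unfolding D_def by (simp add: sum_distrib_left)
  also have "\<dots> \<le> (\<Sum>l<n. \<Sum>a\<in>supp (g k l). \<bar>g k l a\<bar> * (j - 1) + \<bar>g k l a\<bar> * of_bool (c (s+a) l = \<sigma> * sgn (g k l a) * j))"
    by (intro sum_mono termwise) (use sig bound in \<open>auto simp: supp_def\<close>)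
  also have "\<dots> = (j - 1) * S + T"
    unfolding S_def T_def by (simp add: sum.distrib sum_distrib_left sum_distrib_right mult.commute)
  finally have sD: "\<sigma> * D \<le> (j - 1) * S + T" .
  have ss: "\<sigma> * \<sigma> = 1" using sig by auto
  have sR: "\<sigma> * rmul n (fstar M g) c s k = M k * j - \<sigma> * D"
    unfolding R csk by (simp add: algebra_simps ss)
  have "(j - 1) * S \<le> (j - 1) * M k" using Mdom j unfolding S_def by (intro mult_left_mono) auto
  then have main: "M k - T \<le> \<sigma> * rmul n (fstar M g) c s k" using sR sD by (simp add: algebra_simps)
  show ?thesis unfolding T_def[symmetric]
    using main y1 y2 by auto
qed


lemma cmax_bound:
  assumes "c \<in> Vset n N" "m < n"
  shows "\<bar>c t m\<bar> \<le> cmax n c"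
proof -
  have sub: "{\<bar>c t m\<bar> | t m. m < n} \<subseteq> {0..N}" using assms(1) by (auto simp: Vset_def)
  have "finite {\<bar>c t m\<bar> | t m. m < n}" by (rule finite_subset[OF sub]) simp
  then show ?thesis unfolding cmax_def by (rule Max_ge) (use assms(2) in blast)
qed

lemma hbound:
  fixes g :: "nat \<Rightarrow> nat \<Rightarrow> 'g::group_add \<Rightarrow> int"
  assumes fin: "\<forall>m<n. finite (supp (g k m))"
    and Psemi: "\<forall>a\<in>P. \<forall>b\<in>P. a + b \<in> P"
    and gsupp: "\<forall>m<n. supp (g k m) \<subseteq> P"
    and x: "x \<in> Pi\<^sub>E (ltrans s P) (\<lambda>_. Sf n M)"
    and yc: "(y, c) \<in> Zset n M g N" and cm: "cmax n c = j"
    and xy: "x = proj (ltrans s P) y"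
  shows "(\<Sum>l<n. \<Sum>a\<in>supp (g k l). \<bar>g k l a\<bar> * of_bool (c (s+a) l = \<sigma> * sgn (g k l a) * j))
      \<le> hfun n M g N P \<sigma> j s k x"
proof -
  have "(\<Sum>l<n. \<Sum>a\<in>supp (g k l). \<bar>g k l a\<bar> * of_bool (c (s+a) l = \<sigma> * sgn (g k l a) * j))
      = (\<Sum>(a,m)\<in>Aset n g k. \<bar>g k m a\<bar> * of_bool (c (s+a) m = \<sigma> * sgn (g k m a) * j))"
    by (rule Aset_sum[where g=g and k=k and n=n, symmetric, OF fin])
  also have "\<dots> \<le> hfun n M g N P \<sigma> j s k x"
    unfolding hfun_def
  proof (rule sum_mono, clarify)
    fix a m assume am: "(a, m) \<in> Aset n g k"
    then have mn: "m < n" and ga: "g k m a \<noteq> 0" by (auto simp: Aset_def)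
    have aP: "a \<in> P" using gsupp mn ga by (auto simp: supp_def)
    define E1 where "E1 = ltrans (s + a) (insert 0 P)"
    define L where "L = ltrans s P"
    have E1L: "E1 \<subseteq> L"
    proof
      fix z assume "z \<in> E1"
      then obtain p where p: "p \<in> insert 0 P" "z = s + a + p" unfolding E1_def ltrans_def by blast
      have "a + p \<in> P" using p(1) aP Psemi by auto
      moreover have "z = s + (a + p)" using p(2) by (simp add: add.assoc)
      ultimately show "z \<in> L" by (auto simp: L_def ltrans_def)
    qed
    show "\<bar>g k m a\<bar> * of_bool (c (s+a) m = \<sigma> * sgn (g k m a) * j)
        \<le> \<bar>g k m a\<bar> * of_bool (x \<in> cfgprod (ltrans (s + a) (insert 0 P))
                     (proj (ltrans (s + a) (insert 0 P)) ` fst ` Zsig n M g N (\<sigma> * sgn (g k m a)) j (s + a) m)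
                     (ltrans s P - ltrans (s + a) (insert 0 P))
                     (Pi\<^sub>E (ltrans s P - ltrans (s + a) (insert 0 P)) (\<lambda>_. Sf n M)))"
    proof (cases "c (s+a) m = \<sigma> * sgn (g k m a) * j")
      case False then show ?thesis by simp
    next
      case True
      have mem: "x \<in> cfgprod E1 (proj E1 ` fst ` Zsig n M g N (\<sigma> * sgn (g k m a)) j (s + a) m)
                     (L - E1) (Pi\<^sub>E (L - E1) (\<lambda>_. Sf n M))"
        unfolding cfgprod_def
      proof (intro CollectI conjI)
        have "E1 \<union> (L - E1) = L" using E1L by blast
        then show "x \<in> extensional (E1 \<union> (L - E1))" using x by (simp add: L_def PiE_def)
        have "(y, c) \<in> Zsig n M g N (\<sigma> * sgn (g k m a)) j (s + a) m"
          using yc cm True by (simp add: Zsig_def)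
        then have "y \<in> fst ` Zsig n M g N (\<sigma> * sgn (g k m a)) j (s + a) m"
          by (rule image_eqI[rotated]) simp
        moreover have "restrict x E1 = proj E1 y"
          using E1L unfolding xy proj_def L_def by (auto simp: restrict_def fun_eq_iff)
        ultimately show "restrict x E1 \<in> proj E1 ` fst ` Zsig n M g N (\<sigma> * sgn (g k m a)) j (s + a) m"
          by simp
        show "restrict x (L - E1) \<in> Pi\<^sub>E (L - E1) (\<lambda>_. Sf n M)"
          using x unfolding L_def by (auto simp: PiE_def Pi_def)
      qed
      then show ?thesis unfolding E1_def L_def by simp
    qed
  qed
  finally show ?thesis .
qed

theorem lemma4p6:
  fixes n :: nat and M :: "nat \<Rightarrow> int" and g :: "nat \<Rightarrow> nat \<Rightarrow> 'g::{group_add, countable} \<Rightarrow> int"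
    and P :: "'g set" and N :: int and Finv :: "nat \<Rightarrow> nat \<Rightarrow> 'g \<Rightarrow> real"
  assumes Gamma_inf: "infinite (UNIV :: 'g set)"
    and g_fin: "\<forall>k<n. \<forall>m<n. finite (supp (g k m))"
    and M_pos: "\<forall>k<n. 0 < M k"
    and M_dom: "\<forall>k<n. (\<Sum>m<n. \<Sum>a\<in>supp (g k m). \<bar>g k m a\<bar>) < M k"
    and P_semigroup: "\<forall>a\<in>P. \<forall>b\<in>P. a + b \<in> P"
    and P_no_e: "0 \<notin> P"
    and g_supp: "\<forall>k<n. \<forall>m<n. supp (g k m) \<subseteq> P"
    and Finv_l1: "\<forall>k<n. \<forall>m<n. (\<lambda>t. \<bar>Finv k m t\<bar>) summable_on UNIV"
    and Finv_inv: "\<forall>k<n. \<forall>m<n.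
        matmul n (\<lambda>k' m' t. real_of_int (fstar M g k' m' t)) Finv k m = ident k m \<and>
        matmul n Finv (\<lambda>k' m' t. real_of_int (fstar M g k' m' t)) k m = ident k m"
    and N_bound: "real_of_int (Max (M ` {..<n})) * norm1inf n Finv \<le> real_of_int N"
  shows "\<forall>j\<in>{1..N}. \<forall>s. \<forall>k<n. \<forall>\<sigma>\<in>{1, -1}.
           \<forall>x\<in>Pi\<^sub>E (ltrans s P) (\<lambda>_. Sf n M).
             ufun n M g N P \<sigma> j s k x \<le> hfun n M g N P \<sigma> j s k x"
proof (intro ballI allI impI)
  fix j s k \<sigma> x
  assume j: "j \<in> {1..N}" and kn: "k < n" and sig: "\<sigma> \<in> {1, -1 :: int}"
    and x: "x \<in> Pi\<^sub>E (ltrans s P) (\<lambda>_. Sf n M)"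
  have fin: "\<forall>l<n. finite (supp (g k l))" using g_fin kn by auto
  have gs: "\<forall>l<n. supp (g k l) \<subseteq> P" using g_supp kn by auto
  have g0: "\<forall>l<n. g k l 0 = 0" using gs P_no_e by (auto simp: supp_def)
  have Md: "(\<Sum>m<n. \<Sum>a\<in>supp (g k m). \<bar>g k m a\<bar>) < M k" using M_dom kn by auto
  define h where "h = hfun n M g N P \<sigma> j s k x"
  define Q where "Q = (\<lambda>i. x \<in> proj (ltrans s P) ` fst ` (\<Union>B\<in>Pow (Aset n g k). ZBi n M g N \<sigma> j s k B i))"
  have Qb: "(\<sigma> = 1 \<longrightarrow> i + 1 \<le> h) \<and> (\<sigma> = -1 \<longrightarrow> M k - i \<le> h)" if "Q i" for i
  proof -
    from that obtain y c where yc: "(y, c) \<in> Zsig n M g N \<sigma> j s k" and yi: "y s k = i"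
      and xy: "x = proj (ltrans s P) y"
      unfolding Q_def ZBi_def ZB_def by auto
    have Z: "(y, c) \<in> Zset n M g N" and cm: "cmax n c = j" and csk: "c s k = \<sigma> * j"
      using yc by (auto simp: Zsig_def)
    have cV: "c \<in> Vset n N" and y': "(\<lambda>t m. y t m + rmul n (fstar M g) c t m) \<in> Yset n M"
      using Z by (auto simp: Zset_def)
    have yb: "0 \<le> y s k + rmul n (fstar M g) c s k" "y s k + rmul n (fstar M g) c s k \<le> M k - 1"
      using y' kn by (auto simp: Yset_def Sf_def)
    have bound: "\<forall>t m. m < n \<longrightarrow> \<bar>c t m\<bar> \<le> j" using cmax_bound[OF cV] cm by auto
    have j1: "1 \<le> j" using j by auto
    have K: "(\<sigma> = 1 \<longrightarrow> y s k + 1 \<le> (\<Sum>l<n. \<Sum>a\<in>supp (g k l). \<bar>g k l a\<bar> * of_bool (c (s+a) l = \<sigma> * sgn (g k l a) * j)))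
       \<and> (\<sigma> = -1 \<longrightarrow> M k - y s k \<le> (\<Sum>l<n. \<Sum>a\<in>supp (g k l). \<bar>g k l a\<bar> * of_bool (c (s+a) l = \<sigma> * sgn (g k l a) * j)))"
      by (rule key[where g=g and k=k and n=n and c=c and y=y and s=s and M=M, OF kn fin g0 Md sig j1 bound csk yb])
    have H: "(\<Sum>l<n. \<Sum>a\<in>supp (g k l). \<bar>g k l a\<bar> * of_bool (c (s+a) l = \<sigma> * sgn (g k l a) * j)) \<le> h"
      unfolding h_def by (rule hbound[where g=g and k=k and n=n, OF fin P_semigroup gs x Z cm xy])
    show ?thesis using K H yi by auto
  qed
  have h0: "0 \<le> h" unfolding h_def hfun_def by (intro sum_nonneg) auto
  define I where "I = {0..M k - 1} \<inter> {i. Q i}"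
  have u: "ufun n M g N P \<sigma> j s k x = int (card I)"
    unfolding ufun_def I_def Q_def by simp
  have "card I \<le> nat h"
  proof (cases "\<sigma> = 1")
    case True
    have "I \<subseteq> {0..h - 1}" using Qb True by (force simp: I_def)
    then have "card I \<le> card {0..h - 1}" by (intro card_mono) auto
    then show ?thesis by simp
  next
    case False
    then have s1: "\<sigma> = -1" using sig by auto
    have "I \<subseteq> {M k - h..M k - 1}" using Qb s1 by (force simp: I_def)
    then have "card I \<le> card {M k - h..M k - 1}" by (intro card_mono) auto
    then show ?thesis by simp
  qed
  then show "ufun n M g N P \<sigma> j s k x \<le> hfun n M g N P \<sigma> j s k x"
    using u h0 unfolding h_def by linarith
qed

end
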